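(* Let $\varepsilon_+(C,C_D)$ and $\lambda_+(C_D)$ be as defined in the context. Then: (i) If $B>1+\beta+\delta$: $\lambda_+(C_D)>0$ for every $C_D>0$, and $\varepsilon_+(C,C_D)>0$ for every $(C,C_D)\in[0,\infty)^2\setminus\{(0,0)\}$; thus every equilibrium $(0,0,C_D,0,0,D)$ with $C_D>0$ and every equilibrium $(C,0,C_D,0,0,0)$ with $(C,C_D)\ne(0,0)$ has a positive real Jacobian eigenvalue (is unstable). (ii) If $1+\beta<B<1+\beta+\delta$: $\lambda_+(C_D)<0$ for every $C_D>0$; and for $C,C_D\ge0$ with $C_D>0$, $\varepsilon_+(C,C_D)<0$ if $$\frac{C}{C_D}<\frac{1-\frac{B}{1+\beta+\delta}}{\frac{B}{1+\beta}-1},$$ while $\varepsilon_+(C,C_D)>0$ if the reverse strict inequality holds (and $\varepsilon_+(C,0)>0$ for $C>0$). (iii) If $0<B<1+\beta$: $\lambda_+(C_D)<0$ for every $C_D>0$ and $\varepsilon_+(C,C_D)<0$ for every $(C,C_D)\in[0,\infty)^2\setminus\{(0,0)\}$. In all cases, at every point of $\{(0,0,0,0,V,D):V,D\ge0,(V,D)\ne(0,0)\}$ all Jacobian eigenvalues are non-positive.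
   Context: Consider the autonomous system of ODEs in the state variables $(C,C_V,C_D,C_{DV},V,D)\in\mathbb{R}^6$: $\dot C=-\iota C(V+D)$, $\dot C_V=\iota CV-C_V(\iota D+\alpha)$, $\dot C_D=\iota(CD-C_DV)$, $\dot C_{DV}=\iota(C_DV+C_VD)-\alpha C_{DV}$, $\dot V=\alpha\eta\left(C_V+\frac{C_{DV}}{\kappa}\right)-\iota V(C+C_D)$, $\dot D=\alpha\beta\eta\left(C_V+\frac{C_{DV}}{\kappa}\right)+\alpha\delta\eta\frac{C_{DV}}{\kappa}-\iota D(C+C_V)$, where $B>0$, $\beta\in[0,1]$, $\delta>1$, $\iota>0$, $\alpha>0$, $\eta=\frac{B}{1+\beta}$, $\kappa=1+\frac{\delta}{1+\beta}$. Define $\varepsilon_+(C,C_D)=-\frac{\iota(C+C_D)+\alpha}{2}+\frac12\sqrt{4\alpha C\eta\iota+(\iota(C+C_D)-\alpha)^2+\frac{4\alpha C_D\eta\iota}{\kappa}}$ (the largest non-trivial Jacobian eigenvalue at the equilibrium $(C,0,C_D,0,0,0)$) and $\lambda_+(C_D)=-\frac{\iota C_D+\alpha}{2}+\frac12\sqrt{(\iota C_D-\alpha)^2+\frac{4\alpha C_D\eta\iota}{\kappa}}$ (the largest non-trivial Jacobian eigenvalue at the equilibrium $(0,0,C_D,0,0,D)$). *)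

theory Defs
  imports "HOL-Analysis.Analysis"
begin

definition eta :: "real \<Rightarrow> real \<Rightarrow> real" where
  "eta B \<beta> = B / (1 + \<beta>)"

definition kappa :: "real \<Rightarrow> real \<Rightarrow> real" where
  "kappa \<beta> \<delta> = 1 + \<delta> / (1 + \<beta>)"

definition st :: "real \<Rightarrow> real \<Rightarrow> real \<Rightarrow> real \<Rightarrow> real \<Rightarrow> real \<Rightarrow> real^6" where
  "st C CV CD CDV V D = vector [C, CV, CD, CDV, V, D]"

definition field :: "real \<Rightarrow> real \<Rightarrow> real \<Rightarrow> real \<Rightarrow> real \<Rightarrow> real^6 \<Rightarrow> real^6" where
  "field B \<beta> \<delta> \<iota> \<alpha> x =
     (let C = x$1; CV = x$2; CD = x$3; CDV = x$4; V = x$5; D = x$6;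
          \<eta> = eta B \<beta>; \<kappa> = kappa \<beta> \<delta> in
      st (- \<iota> * C * (V + D))
         (\<iota> * C * V - CV * (\<iota> * D + \<alpha>))
         (\<iota> * (C * D - CD * V))
         (\<iota> * (CD * V + CV * D) - \<alpha> * CDV)
         (\<alpha> * \<eta> * (CV + CDV / \<kappa>) - \<iota> * V * (C + CD))
         (\<alpha> * \<beta> * \<eta> * (CV + CDV / \<kappa>) + \<alpha> * \<delta> * \<eta> * (CDV / \<kappa>) - \<iota> * D * (C + CV)))"

definition jacobian :: "real \<Rightarrow> real \<Rightarrow> real \<Rightarrow> real \<Rightarrow> real \<Rightarrow> real^6 \<Rightarrow> real^6^6" where
  "jacobian B \<beta> \<delta> \<iota> \<alpha> x = matrix (frechet_derivative (field B \<beta> \<delta> \<iota> \<alpha>) (at x))"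

definition is_eigenvalue :: "real^'n^'n \<Rightarrow> complex \<Rightarrow> bool" where
  "is_eigenvalue A z \<longleftrightarrow> det ((\<chi> i j. (if i = j then z else 0) - complex_of_real (A$i$j)) :: complex^'n^'n) = 0"

definition eps_plus :: "real \<Rightarrow> real \<Rightarrow> real \<Rightarrow> real \<Rightarrow> real \<Rightarrow> real \<Rightarrow> real \<Rightarrow> real" where
  "eps_plus B \<beta> \<delta> \<iota> \<alpha> C CD =
     - (\<iota> * (C + CD) + \<alpha>) / 2
     + sqrt (4 * \<alpha> * C * eta B \<beta> * \<iota> + (\<iota> * (C + CD) - \<alpha>)^2
             + 4 * \<alpha> * CD * eta B \<beta> * \<iota> / kappa \<beta> \<delta>) / 2"

definition lam_plus :: "real \<Rightarrow> real \<Rightarrow> real \<Rightarrow> real \<Rightarrow> real \<Rightarrow> real \<Rightarrow> real" where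
  "lam_plus B \<beta> \<delta> \<iota> \<alpha> CD =
     - (\<iota> * CD + \<alpha>) / 2
     + sqrt ((\<iota> * CD - \<alpha>)^2 + 4 * \<alpha> * CD * eta B \<beta> * \<iota> / kappa \<beta> \<delta>) / 2"

end

theory Submission
  imports Defs
begin


lemma exhaust_6:
  fixes x :: 6
  shows "x = 1 \<or> x = 2 \<or> x = 3 \<or> x = 4 \<or> x = 5 \<or> x = 6"
proof (induct x)
  case (of_int z)
  then have "z = 0 \<or> z = 1 \<or> z = 2 \<or> z = 3 \<or> z = 4 \<or> z = 5" by fastforce
  then show ?case by auto
qed

lemma UNIV_6: "UNIV = {1, 2, 3, 4, 5, 6::6}"
  using exhaust_6 by auto

lemma sum_6: "sum f (UNIV::6 set) = f 1 + f 2 + f 3 + f 4 + f 5 + f 6"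
  unfolding UNIV_6 by (simp add: ac_simps)

lemma st_nth [simp]:
  "st a b c d e f $ 1 = a" "st a b c d e f $ 2 = b" "st a b c d e f $ 3 = c"
  "st a b c d e f $ 4 = d" "st a b c d e f $ 5 = e" "st a b c d e f $ 6 = f"
  unfolding st_def vector_def by simp_all

lemma st_eq_iff: "(x::real^6) = y \<longleftrightarrow> (\<forall>k\<in>{1,2,3,4,5,6::6}. x$k = y$k)"
  by (metis UNIV_6 UNIV_I vec_eq_iff)

lemma st_lin: "st a b c d e f = a *\<^sub>R st 1 0 0 0 0 0 + b *\<^sub>R st 0 1 0 0 0 0 + c *\<^sub>R st 0 0 1 0 0 0
   + d *\<^sub>R st 0 0 0 1 0 0 + e *\<^sub>R st 0 0 0 0 1 0 + f *\<^sub>R st 0 0 0 0 0 1"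
  by (simp add: st_eq_iff)



definition Lf :: "real \<Rightarrow> real \<Rightarrow> real \<Rightarrow> real \<Rightarrow> real \<Rightarrow> real^6 \<Rightarrow> real^6 \<Rightarrow> real^6" where
 "Lf B \<beta> \<delta> \<iota> \<alpha> x h =
     (let C = x$1; CV = x$2; CD = x$3; CDV = x$4; V = x$5; D = x$6;
          h1 = h$1; h2 = h$2; h3 = h$3; h4 = h$4; h5 = h$5; h6 = h$6;
          \<eta> = eta B \<beta>; \<kappa> = kappa \<beta> \<delta> in
      st (- \<iota> * (h1 * (V + D) + C * (h5 + h6)))
         (\<iota> * (h1 * V + C * h5) - (h2 * (\<iota> * D + \<alpha>) + CV * \<iota> * h6))
         (\<iota> * (h1 * D + C * h6 - h3 * V - CD * h5))
         (\<iota> * (h3 * V + CD * h5 + h2 * D + CV * h6) - \<alpha> * h4)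
         (\<alpha> * \<eta> * (h2 + h4 / \<kappa>) - \<iota> * (h5 * (C + CD) + V * (h1 + h3)))
         (\<alpha> * \<beta> * \<eta> * (h2 + h4 / \<kappa>) + \<alpha> * \<delta> * \<eta> * (h4 / \<kappa>) - \<iota> * (h6 * (C + CV) + D * (h1 + h2))))"

lemma vn_der: "((\<lambda>x::real^6. x $ i) has_derivative (\<lambda>h. h $ i)) F"
  by (rule bounded_linear_imp_has_derivative[OF bounded_linear_vec_nth])

lemma hd_eq: "(f has_derivative g) F \<Longrightarrow> g = h \<Longrightarrow> (f has_derivative h) F" by simp

lemma field_der: "(field B \<beta> \<delta> \<iota> \<alpha> has_derivative Lf B \<beta> \<delta> \<iota> \<alpha> x) (at x)"
  unfolding field_def Lf_def Let_def divide_inverse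
  apply (rule hd_eq)
  apply (subst st_lin)
  apply (rule derivative_intros vn_der)+
  apply (rule ext)
  apply (simp add: st_eq_iff algebra_simps)
  done



lemma jac_eq: "jacobian B \<beta> \<delta> \<iota> \<alpha> x = matrix (Lf B \<beta> \<delta> \<iota> \<alpha> x)"
  unfolding jacobian_def using frechet_derivative_at[OF field_der] by metis

lemma Lf_linear: "linear (Lf B \<beta> \<delta> \<iota> \<alpha> x)"
  using field_der has_derivative_linear by blast

lemma det0_ker:
  fixes M :: "'a::field^'n^'n"
  shows "det M = 0 \<longleftrightarrow> (\<exists>v. v \<noteq> 0 \<and> M *v v = 0)"
  using invertible_det_nz[of M] invertible_left_inverse[of M] matrix_left_invertible_ker[of M]
  by blast

lemma eig_real:
  fixes w :: "real^6"
  assumes "w \<noteq> 0" "Lf B \<beta> \<delta> \<iota> \<alpha> x w = \<mu> *\<^sub>R w"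
  shows "is_eigenvalue (jacobian B \<beta> \<delta> \<iota> \<alpha> x) (complex_of_real \<mu>)"
proof -
  let ?J = "jacobian B \<beta> \<delta> \<iota> \<alpha> x"
  have Jw: "?J *v w = \<mu> *\<^sub>R w"
    unfolding jac_eq using matrix_vector_mul(2)[OF Lf_linear] assms(2) by metis
  define v where "v = (\<chi> i. complex_of_real (w$i))"
  have vnz: "v \<noteq> 0" using assms(1) by (auto simp: v_def vec_eq_iff)
  let ?M = "(\<chi> i j. (if i = j then complex_of_real \<mu> else 0) - complex_of_real (?J$i$j)) :: complex^6^6"
  have "?M *v v = 0"
  proof -
    have "(?M *v v) $ i = 0" for i
    proof -
      have "(?M *v v) $ i = (\<Sum>j\<in>UNIV. ((if i = j then complex_of_real \<mu> else 0) - complex_of_real (?J$i$j)) * complex_of_real (w$j))"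
        by (simp add: matrix_vector_mult_def v_def)
      also have "\<dots> = (\<Sum>j\<in>UNIV. (if i = j then complex_of_real \<mu> * complex_of_real (w$j) else 0)) - (\<Sum>j\<in>UNIV. complex_of_real (?J$i$j) * complex_of_real (w$j))"
        by (subst sum_subtractf[symmetric]) (rule sum.cong, auto simp: algebra_simps)
      also have "\<dots> = complex_of_real (\<mu> * w$i) - complex_of_real ((?J *v w)$i)"
        by (simp add: matrix_vector_mult_def)
      also have "\<dots> = 0" using Jw by simp
      finally show ?thesis .
    qed
    then show ?thesis by (simp add: vec_eq_iff)
  qed
  then show ?thesis unfolding is_eigenvalue_def using det0_ker vnz by blast
qed



lemma Mv_nth:
  "((\<chi> i j. (if i = j then z else 0) - complex_of_real (jacobian B \<beta> \<delta> \<iota> \<alpha> x$i$j)) *v v) $ i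
   = z * v$i - (\<Sum>j\<in>UNIV. complex_of_real (Lf B \<beta> \<delta> \<iota> \<alpha> x (axis j 1) $ i) * v$j)"
proof -
  have "((\<chi> i j. (if i = j then z else 0) - complex_of_real (jacobian B \<beta> \<delta> \<iota> \<alpha> x$i$j)) *v v) $ i
     = (\<Sum>j\<in>UNIV. (if i = j then z else 0) * v$j - complex_of_real (jacobian B \<beta> \<delta> \<iota> \<alpha> x$i$j) * v$j)"
    by (simp add: matrix_vector_mult_def left_diff_distrib)
  also have "\<dots> = (\<Sum>j\<in>UNIV. (if i = j then z else 0) * v$j) - (\<Sum>j\<in>UNIV. complex_of_real (jacobian B \<beta> \<delta> \<iota> \<alpha> x$i$j) * v$j)"
    by (simp add: sum_subtractf)
  also have "(\<Sum>j\<in>UNIV. (if i = j then z else 0) * v$j) = z * v$i"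
    by (simp add: if_distrib[of "\<lambda>a. a * _"] cong: if_cong)
  finally have "((\<chi> i j. (if i = j then z else 0) - complex_of_real (jacobian B \<beta> \<delta> \<iota> \<alpha> x$i$j)) *v v) $ i
     = z * v$i - (\<Sum>j\<in>UNIV. complex_of_real (jacobian B \<beta> \<delta> \<iota> \<alpha> x$i$j) * v$j)" .
  then show ?thesis by (simp add: jac_eq matrix_def)
qed

lemma last_part:
  assumes h\<iota>: "\<iota> > 0" and h\<alpha>: "\<alpha> > 0" and "V \<ge> 0" "D \<ge> 0" "(V, D) \<noteq> (0, 0)"
    and ev: "is_eigenvalue (jacobian B \<beta> \<delta> \<iota> \<alpha> (st 0 0 0 0 V D)) z"
  shows "Im z = 0 \<and> Re z \<le> 0"
proof (rule ccontr)
  assume nz: "\<not> (Im z = 0 \<and> Re z \<le> 0)"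
  have key: "z + complex_of_real c \<noteq> 0" if "c \<ge> 0" for c
    using nz that by (auto simp: complex_eq_iff)
  have z0: "z \<noteq> 0" using key[of 0] by simp
  let ?M = "(\<chi> i j. (if i = j then z else 0) - complex_of_real (jacobian B \<beta> \<delta> \<iota> \<alpha> (st 0 0 0 0 V D)$i$j)) :: complex^6^6"
  obtain v where vnz: "v \<noteq> 0" and Mv: "?M *v v = 0"
    using ev unfolding is_eigenvalue_def det0_ker by blast
  have e: "(?M *v v) $ k = 0" for k using Mv by simp
  note E = e[unfolded Mv_nth sum_6, simplified Lf_def Let_def axis_def, simplified]
  have VD: "V + D > 0" using assms by auto
  show False
  proof -
    from E[of 1] have "(z + complex_of_real (\<iota> * (V + D))) * v$1 = 0" by (auto simp: algebra_simps eq_neg_iff_add_eq_0)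
    then have v1: "v$1 = 0" using key[of "\<iota> * (V + D)"] VD h\<iota> by simp
    from E[of 2] v1 have "(z + complex_of_real (\<iota> * D + \<alpha>)) * v$2 = 0" by (auto simp: algebra_simps eq_neg_iff_add_eq_0)
    then have v2: "v$2 = 0" using key[of "\<iota> * D + \<alpha>"] assms by simp
    from E[of 3] v1 have "(z + complex_of_real (\<iota> * V)) * v$3 = 0" by (auto simp: algebra_simps eq_neg_iff_add_eq_0)
    then have v3: "v$3 = 0" using key[of "\<iota> * V"] assms by simp
    from E[of 4] v2 v3 have "(z + complex_of_real \<alpha>) * v$4 = 0" by (auto simp: algebra_simps eq_neg_iff_add_eq_0)
    then have v4: "v$4 = 0" using key[of "\<alpha>"] assms by simp
    from E[of 5] v1 v2 v3 v4 have v5: "v$5 = 0" using z0 by simp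
    from E[of 6] v1 v2 v3 v4 have v6: "v$6 = 0" using z0 by simp
    have "v = 0" unfolding vec_eq_iff using v1 v2 v3 v4 v5 v6 exhaust_6 by (metis zero_index)
    then show False using vnz by simp
  qed
qed



lemma quad_root:
  fixes p c d :: real
  assumes "d \<ge> 0" "d = p^2 - 4*c"
  shows "(-p/2 + sqrt d/2)^2 + p*(-p/2 + sqrt d/2) + c = 0"
proof -
  have "sqrt d ^ 2 = d" using assms(1) by simp
  then show ?thesis using assms(2) by (simp add: power2_eq_square field_simps)
qed

lemma root_pos:
  fixes p q :: real
  assumes "p > 0" "q > 0"
  shows "-p/2 + sqrt (p^2 + 4*q)/2 > 0"
proof -
  have "p < sqrt (p^2 + 4*q)" using assms by (intro real_less_rsqrt) simp
  then show ?thesis by simp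
qed

lemma root_neg:
  fixes p q :: real
  assumes "p > 0" "q < 0"
  shows "-p/2 + sqrt (p^2 + 4*q)/2 < 0"
proof -
  have "sqrt (p^2 + 4*q) < sqrt (p^2)" using assms by (intro real_sqrt_less_mono) simp
  then have "sqrt (p^2 + 4*q) < p" using assms by simp
  then show ?thesis by simp
qed

lemma eig_C:
  assumes h\<iota>: "\<iota> > 0" and h\<alpha>: "\<alpha> > 0" and z: "z > 0" and hk: "kappa \<beta> \<delta> > 0"
    and q: "(z + \<alpha>) * (z + \<iota> * CD) = \<alpha> * eta B \<beta> * \<iota> * CD / kappa \<beta> \<delta>"
  shows "is_eigenvalue (jacobian B \<beta> \<delta> \<iota> \<alpha> (st 0 0 CD 0 0 D)) (complex_of_real z)"
proof (rule eig_real)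
  let ?e = "eta B \<beta>" and ?k = "kappa \<beta> \<delta>"
  define w where "w = st 0 0 (-\<iota>*CD/z) (\<iota>*CD/(z+\<alpha>)) 1 (\<alpha>*(\<beta>+\<delta>)*?e/?k * (\<iota>*CD/(z+\<alpha>))/z)"
  show "w \<noteq> 0" unfolding w_def by (metis st_nth(5) zero_index zero_neq_one)
  have za: "z + \<alpha> \<noteq> 0" using z h\<alpha> by simp
  have q': "\<alpha> * ?e * (\<iota> * CD / (z + \<alpha>)) / ?k - \<iota> * CD = z"
  proof -
    have "\<alpha> * ?e * (\<iota> * CD / (z + \<alpha>)) / ?k = (\<alpha> * ?e * \<iota> * CD / ?k) / (z + \<alpha>)"
      by (simp add: ac_simps)
    also have "\<dots> = (z + \<iota> * CD)" using q za hk by (simp add: divide_eq_eq eq_divide_eq ac_simps)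
    finally have "\<alpha> * ?e * (\<iota> * CD / (z + \<alpha>)) / ?k = (z + \<iota> * CD)" .
    then show ?thesis by simp
  qed
  show "Lf B \<beta> \<delta> \<iota> \<alpha> (st 0 0 CD 0 0 D) w = z *\<^sub>R w"
    unfolding st_eq_iff using z za q'
    apply (simp add: w_def Lf_def Let_def)
    apply (intro conjI)
     apply (simp add: field_simps)
    apply (simp add: field_simps add_divide_distrib)
    done
qed



lemma eig_D:
  assumes h\<iota>: "\<iota> > 0" and h\<alpha>: "\<alpha> > 0" and z: "z > 0" and hC: "C \<ge> 0" and hk: "kappa \<beta> \<delta> > 0"
    and q: "(z + \<alpha>) * (z + \<iota> * (C + CD)) = \<alpha> * eta B \<beta> * \<iota> * (C + CD / kappa \<beta> \<delta>)"
  shows "is_eigenvalue (jacobian B \<beta> \<delta> \<iota> \<alpha> (st C 0 CD 0 0 0)) (complex_of_real z)"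
proof (rule eig_real)
  let ?e = "eta B \<beta>" and ?k = "kappa \<beta> \<delta>"
  define h2 where "h2 = \<iota> * C / (z + \<alpha>)"
  define h4 where "h4 = \<iota> * CD / (z + \<alpha>)"
  define h6 where "h6 = (\<alpha> * \<beta> * ?e * (h2 + h4 / ?k) + \<alpha> * \<delta> * ?e * (h4 / ?k)) / (z + \<iota> * C)"
  define h1 where "h1 = - \<iota> * C * (1 + h6) / z"
  define h3 where "h3 = \<iota> * (C * h6 - CD) / z"
  define w where "w = st h1 h2 h3 h4 1 h6"
  show "w \<noteq> 0" unfolding w_def by (metis st_nth(5) zero_index zero_neq_one)
  have za: "z + \<alpha> > 0" using z h\<alpha> by simp
  have zc: "z + \<iota> * C > 0" using z h\<iota> hC by (simp add: add_pos_nonneg)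
  have q': "\<alpha> * ?e * (h2 + h4 / ?k) - \<iota> * (C + CD) = z"
  proof -
    have "\<alpha> * ?e * (h2 + h4 / ?k) = (\<alpha> * ?e * \<iota> * (C + CD / ?k)) / (z + \<alpha>)"
    proof -
      have "h4 / ?k = (\<iota> * CD / ?k) / (z + \<alpha>)" unfolding h4_def by (simp add: mult.commute)
      then have "h2 + h4 / ?k = (\<iota> * C + \<iota> * CD / ?k) / (z + \<alpha>)"
        unfolding h2_def by (simp only: add_divide_distrib)
      moreover have "\<iota> * C + \<iota> * CD / ?k = \<iota> * (C + CD / ?k)" by (simp add: distrib_left)
      ultimately have "h2 + h4 / ?k = \<iota> * (C + CD / ?k) / (z + \<alpha>)" by simp
      then show ?thesis by simp
    qed
    also have "\<dots> = z + \<iota> * (C + CD)" using q za by (simp add: divide_eq_eq ac_simps)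
    finally show ?thesis by simp
  qed
  have r6: "\<alpha> * \<beta> * ?e * (h2 + h4 / ?k) + \<alpha> * \<delta> * ?e * (h4 / ?k) - \<iota> * (h6 * C) = z * h6"
  proof -
    have "h6 * (z + \<iota> * C) = \<alpha> * \<beta> * ?e * (h2 + h4 / ?k) + \<alpha> * \<delta> * ?e * (h4 / ?k)"
      unfolding h6_def using zc by simp
    then show ?thesis by (simp add: algebra_simps)
  qed
  have r1: "- \<iota> * (h1 * 0 + C * (1 + h6)) = z * h1" unfolding h1_def using z by simp
  have r3: "\<iota> * (h1 * 0 + C * h6 - h3 * 0 - CD * 1) = z * h3" unfolding h3_def using z by simp
  have r2: "\<iota> * (h1 * 0 + C * 1) - (h2 * (\<iota> * 0 + \<alpha>) + 0 * \<iota> * h6) = z * h2"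
    unfolding h2_def using za by (simp add: field_simps)
  have r4: "\<iota> * (h3 * 0 + CD * 1 + h2 * 0 + 0 * h6) - \<alpha> * h4 = z * h4"
    unfolding h4_def using za by (simp add: field_simps)
  show "Lf B \<beta> \<delta> \<iota> \<alpha> (st C 0 CD 0 0 0) w = z *\<^sub>R w"
    unfolding st_eq_iff
    using q' r1 r2 r3 r4 r6
    by (simp add: w_def Lf_def Let_def)
qed



lemma eps_form:
  fixes \<iota> \<alpha> C CD B \<beta> \<delta> :: real
  defines "e \<equiv> eta B \<beta>" and "k \<equiv> kappa \<beta> \<delta>"
  shows "eps_plus B \<beta> \<delta> \<iota> \<alpha> C CD = -(\<iota> * (C + CD) + \<alpha>)/2
     + sqrt ((\<iota> * (C + CD) + \<alpha>)^2 + 4 * (\<alpha> * \<iota> * (e * C + e * CD / k - C - CD)))/2"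
proof -
  have "4 * \<alpha> * C * e * \<iota> + (\<iota> * (C + CD) - \<alpha>)^2 + 4 * \<alpha> * CD * e * \<iota> / k
      = (\<iota> * (C + CD) + \<alpha>)^2 + 4 * (\<alpha> * \<iota> * (e * C + e * CD / k - C - CD))"
    by (simp add: power2_eq_square algebra_simps)
  then show ?thesis unfolding eps_plus_def e_def k_def by simp
qed

lemma lam_eps: "lam_plus B \<beta> \<delta> \<iota> \<alpha> CD = eps_plus B \<beta> \<delta> \<iota> \<alpha> 0 CD"
  unfolding lam_plus_def eps_plus_def by simp

lemma eps_pos:
  assumes "\<iota> > 0" "\<alpha> > 0" "C \<ge> 0" "CD \<ge> 0"
    "eta B \<beta> * C + eta B \<beta> * CD / kappa \<beta> \<delta> - C - CD > 0"
  shows "eps_plus B \<beta> \<delta> \<iota> \<alpha> C CD > 0"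
  unfolding eps_form using assms
  by (intro root_pos) (auto intro!: add_nonneg_pos mult_nonneg_nonneg)

lemma eps_neg:
  assumes "\<iota> > 0" "\<alpha> > 0" "C \<ge> 0" "CD \<ge> 0"
    "eta B \<beta> * C + eta B \<beta> * CD / kappa \<beta> \<delta> - C - CD < 0"
  shows "eps_plus B \<beta> \<delta> \<iota> \<alpha> C CD < 0"
  unfolding eps_form using assms
  by (intro root_neg) (auto intro!: add_nonneg_pos mult_nonneg_nonneg simp: mult_pos_neg)

lemma eps_quad:
  assumes "\<iota> > 0" "\<alpha> > 0" "C \<ge> 0" "CD \<ge> 0" "eta B \<beta> > 0" "kappa \<beta> \<delta> > 0"
  defines "z \<equiv> eps_plus B \<beta> \<delta> \<iota> \<alpha> C CD"
  shows "(z + \<alpha>) * (z + \<iota> * (C + CD)) = \<alpha> * eta B \<beta> * \<iota> * (C + CD / kappa \<beta> \<delta>)"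
proof -
  let ?e = "eta B \<beta>" and ?k = "kappa \<beta> \<delta>"
  let ?p = "\<iota> * (C + CD) + \<alpha>" and ?c = "- (\<alpha> * \<iota> * (?e * C + ?e * CD / ?k - C - CD))"
  let ?d = "4 * \<alpha> * C * ?e * \<iota> + (\<iota> * (C + CD) - \<alpha>)^2 + 4 * \<alpha> * CD * ?e * \<iota> / ?k"
  have d0: "?d \<ge> 0" using assms by (intro add_nonneg_nonneg) auto
  have dd: "?d = ?p^2 - 4 * ?c" by (simp add: power2_eq_square algebra_simps)
  have zz: "z = -?p/2 + sqrt ?d/2" unfolding z_def eps_plus_def by simp
  have "z^2 + ?p * z + ?c = 0" unfolding zz by (rule quad_root[OF d0 dd])
  then show ?thesis by (simp add: power2_eq_square algebra_simps)
qed



theorem mainTheorem8: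
  fixes B \<beta> \<delta> \<iota> \<alpha> :: real
  assumes hB: "B > 0" and h\<beta>: "0 \<le> \<beta>" "\<beta> \<le> 1" and h\<delta>: "\<delta> > 1"
    and h\<iota>: "\<iota> > 0" and h\<alpha>: "\<alpha> > 0"
  shows
   "(B > 1 + \<beta> + \<delta> \<longrightarrow>
      (\<forall>CD > 0. lam_plus B \<beta> \<delta> \<iota> \<alpha> CD > 0) \<and>
      (\<forall>C CD. C \<ge> 0 \<and> CD \<ge> 0 \<and> (C, CD) \<noteq> (0, 0) \<longrightarrow> eps_plus B \<beta> \<delta> \<iota> \<alpha> C CD > 0) \<and>
      (\<forall>CD D. CD > 0 \<longrightarrow>
         (\<exists>\<mu>::real. \<mu> > 0 \<and> is_eigenvalue (jacobian B \<beta> \<delta> \<iota> \<alpha> (st 0 0 CD 0 0 D)) (complex_of_real \<mu>))) \<and>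
      (\<forall>C CD. C \<ge> 0 \<and> CD \<ge> 0 \<and> (C, CD) \<noteq> (0, 0) \<longrightarrow>
         (\<exists>\<mu>::real. \<mu> > 0 \<and> is_eigenvalue (jacobian B \<beta> \<delta> \<iota> \<alpha> (st C 0 CD 0 0 0)) (complex_of_real \<mu>)))) \<and>
    (1 + \<beta> < B \<and> B < 1 + \<beta> + \<delta> \<longrightarrow>
      (\<forall>CD > 0. lam_plus B \<beta> \<delta> \<iota> \<alpha> CD < 0) \<and>
      (\<forall>C CD. C \<ge> 0 \<and> CD > 0 \<and>
         C / CD < (1 - B / (1 + \<beta> + \<delta>)) / (B / (1 + \<beta>) - 1) \<longrightarrow> eps_plus B \<beta> \<delta> \<iota> \<alpha> C CD < 0) \<and>
      (\<forall>C CD. C \<ge> 0 \<and> CD > 0 \<and>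
         C / CD > (1 - B / (1 + \<beta> + \<delta>)) / (B / (1 + \<beta>) - 1) \<longrightarrow> eps_plus B \<beta> \<delta> \<iota> \<alpha> C CD > 0) \<and>
      (\<forall>C > 0. eps_plus B \<beta> \<delta> \<iota> \<alpha> C 0 > 0)) \<and>
    (B < 1 + \<beta> \<longrightarrow>
      (\<forall>CD > 0. lam_plus B \<beta> \<delta> \<iota> \<alpha> CD < 0) \<and>
      (\<forall>C CD. C \<ge> 0 \<and> CD \<ge> 0 \<and> (C, CD) \<noteq> (0, 0) \<longrightarrow> eps_plus B \<beta> \<delta> \<iota> \<alpha> C CD < 0)) \<and>
    (\<forall>V D z. V \<ge> 0 \<and> D \<ge> 0 \<and> (V, D) \<noteq> (0, 0) \<and>
       is_eigenvalue (jacobian B \<beta> \<delta> \<iota> \<alpha> (st 0 0 0 0 V D)) z \<longrightarrow>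
       Im z = 0 \<and> Re z \<le> 0)"
proof -
  define e where "e = eta B \<beta>"
  define k where "k = kappa \<beta> \<delta>"
  have b1: "1 + \<beta> > 0" using h\<beta> by simp
  have b2: "1 + \<beta> + \<delta> > 0" using h\<beta> h\<delta> by simp
  have e_def': "e = B / (1 + \<beta>)" unfolding e_def eta_def ..
  have k_def': "k = (1 + \<beta> + \<delta>) / (1 + \<beta>)" unfolding k_def kappa_def using b1 by (simp add: field_simps)
  have epos: "e > 0" using hB b1 by (simp add: e_def')
  have kpos: "k > 0" using b1 b2 by (simp add: k_def')
  have ek: "e / k = B / (1 + \<beta> + \<delta>)" using b1 b2 by (simp add: e_def' k_def')
  have Qeq: "e * C + e * CD / k - C - CD = C * (e - 1) + CD * (e / k - 1)" for C CD
    by (simp add: algebra_simps)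
  have QP: "eps_plus B \<beta> \<delta> \<iota> \<alpha> C CD > 0" if "C \<ge> 0" "CD \<ge> 0" "C * (e - 1) + CD * (e / k - 1) > 0" for C CD
    using eps_pos[OF h\<iota> h\<alpha> that(1,2)] that(3) Qeq unfolding e_def k_def by metis
  have QN: "eps_plus B \<beta> \<delta> \<iota> \<alpha> C CD < 0" if "C \<ge> 0" "CD \<ge> 0" "C * (e - 1) + CD * (e / k - 1) < 0" for C CD
    using eps_neg[OF h\<iota> h\<alpha> that(1,2)] that(3) Qeq unfolding e_def k_def by metis
  have e1_iff: "e > 1 \<longleftrightarrow> B > 1 + \<beta>" "e < 1 \<longleftrightarrow> B < 1 + \<beta>"
    using b1 by (simp_all add: e_def' divide_less_eq less_divide_eq)
  have ek1_iff: "e / k > 1 \<longleftrightarrow> B > 1 + \<beta> + \<delta>" "e / k < 1 \<longleftrightarrow> B < 1 + \<beta> + \<delta>"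
    using b2 by (simp_all add: ek divide_less_eq less_divide_eq)
  have lamq: "(z + \<alpha>) * (z + \<iota> * CD) = \<alpha> * eta B \<beta> * \<iota> * CD / kappa \<beta> \<delta>"
    if "CD \<ge> 0" "z = lam_plus B \<beta> \<delta> \<iota> \<alpha> CD" for z CD
    using eps_quad[OF h\<iota> h\<alpha> order_refl that(1), of B \<beta> \<delta>] epos kpos that(2)
    unfolding e_def k_def lam_eps by simp
  have epsq: "(z + \<alpha>) * (z + \<iota> * (C + CD)) = \<alpha> * eta B \<beta> * \<iota> * (C + CD / kappa \<beta> \<delta>)"
    if "C \<ge> 0" "CD \<ge> 0" "z = eps_plus B \<beta> \<delta> \<iota> \<alpha> C CD" for z C CD
    using eps_quad[OF h\<iota> h\<alpha> that(1,2), of B \<beta> \<delta>] epos kpos that(3)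
    unfolding e_def k_def by simp
  have kpos': "kappa \<beta> \<delta> > 0" using kpos k_def by simp
  have P1: "B > 1 + \<beta> + \<delta> \<longrightarrow>
      (\<forall>CD > 0. lam_plus B \<beta> \<delta> \<iota> \<alpha> CD > 0) \<and>
      (\<forall>C CD. C \<ge> 0 \<and> CD \<ge> 0 \<and> (C, CD) \<noteq> (0, 0) \<longrightarrow> eps_plus B \<beta> \<delta> \<iota> \<alpha> C CD > 0) \<and>
      (\<forall>CD D. CD > 0 \<longrightarrow>
         (\<exists>\<mu>::real. \<mu> > 0 \<and> is_eigenvalue (jacobian B \<beta> \<delta> \<iota> \<alpha> (st 0 0 CD 0 0 D)) (complex_of_real \<mu>))) \<and>
      (\<forall>C CD. C \<ge> 0 \<and> CD \<ge> 0 \<and> (C, CD) \<noteq> (0, 0) \<longrightarrow>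
         (\<exists>\<mu>::real. \<mu> > 0 \<and> is_eigenvalue (jacobian B \<beta> \<delta> \<iota> \<alpha> (st C 0 CD 0 0 0)) (complex_of_real \<mu>)))"
  proof
    assume hB1: "B > 1 + \<beta> + \<delta>"
    have g1: "e > 1" using hB1 h\<delta> e1_iff by simp
    have g2: "e / k > 1" using hB1 ek1_iff by simp
    have epsP: "eps_plus B \<beta> \<delta> \<iota> \<alpha> C CD > 0" if "C \<ge> 0" "CD \<ge> 0" "(C, CD) \<noteq> (0, 0)" for C CD
    proof (rule QP[OF that(1,2)])
      show "C * (e - 1) + CD * (e / k - 1) > 0"
      proof (cases "C = 0")
        case True
        then have "CD > 0" using that by auto
        then show ?thesis using True g2 by simp
      next
        case False
        then have "C > 0" using that by auto
        then show ?thesis using g1 g2 that(2) by (intro add_pos_nonneg) auto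
      qed
    qed
    have lamP: "lam_plus B \<beta> \<delta> \<iota> \<alpha> CD > 0" if "CD > 0" for CD
      unfolding lam_eps using epsP[of 0 CD] that by simp
    show "(\<forall>CD > 0. lam_plus B \<beta> \<delta> \<iota> \<alpha> CD > 0) \<and>
      (\<forall>C CD. C \<ge> 0 \<and> CD \<ge> 0 \<and> (C, CD) \<noteq> (0, 0) \<longrightarrow> eps_plus B \<beta> \<delta> \<iota> \<alpha> C CD > 0) \<and>
      (\<forall>CD D. CD > 0 \<longrightarrow>
         (\<exists>\<mu>::real. \<mu> > 0 \<and> is_eigenvalue (jacobian B \<beta> \<delta> \<iota> \<alpha> (st 0 0 CD 0 0 D)) (complex_of_real \<mu>))) \<and>
      (\<forall>C CD. C \<ge> 0 \<and> CD \<ge> 0 \<and> (C, CD) \<noteq> (0, 0) \<longrightarrow>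
         (\<exists>\<mu>::real. \<mu> > 0 \<and> is_eigenvalue (jacobian B \<beta> \<delta> \<iota> \<alpha> (st C 0 CD 0 0 0)) (complex_of_real \<mu>)))"
    proof (intro conjI allI impI)
      fix CD :: real assume "CD > 0" then show "lam_plus B \<beta> \<delta> \<iota> \<alpha> CD > 0" by (rule lamP)
    next
      fix C CD :: real assume "C \<ge> 0 \<and> CD \<ge> 0 \<and> (C, CD) \<noteq> (0, 0)"
      then show "eps_plus B \<beta> \<delta> \<iota> \<alpha> C CD > 0" using epsP by blast
    next
      fix CD D :: real assume cd: "CD > 0"
      show "\<exists>\<mu>::real. \<mu> > 0 \<and> is_eigenvalue (jacobian B \<beta> \<delta> \<iota> \<alpha> (st 0 0 CD 0 0 D)) (complex_of_real \<mu>)"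
        using lamP[OF cd] eig_C[OF h\<iota> h\<alpha> lamP[OF cd] kpos' lamq[OF _ refl]] cd by auto
    next
      fix C CD :: real assume cc: "C \<ge> 0 \<and> CD \<ge> 0 \<and> (C, CD) \<noteq> (0, 0)"
      then have pz: "eps_plus B \<beta> \<delta> \<iota> \<alpha> C CD > 0" using epsP by blast
      show "\<exists>\<mu>::real. \<mu> > 0 \<and> is_eigenvalue (jacobian B \<beta> \<delta> \<iota> \<alpha> (st C 0 CD 0 0 0)) (complex_of_real \<mu>)"
        using pz eig_D[OF h\<iota> h\<alpha> pz _ kpos' epsq[OF _ _ refl]] cc by auto
    qed
  qed
  have frac: "(C / CD < r / s) = (C * s < r * CD)" "(C / CD > r / s) = (C * s > r * CD)"
    if "CD > 0" "s > 0" for CD s C r :: real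
    using that by (simp_all add: field_simps)
  have P2: "1 + \<beta> < B \<and> B < 1 + \<beta> + \<delta> \<longrightarrow>
      (\<forall>CD > 0. lam_plus B \<beta> \<delta> \<iota> \<alpha> CD < 0) \<and>
      (\<forall>C CD. C \<ge> 0 \<and> CD > 0 \<and>
         C / CD < (1 - B / (1 + \<beta> + \<delta>)) / (B / (1 + \<beta>) - 1) \<longrightarrow> eps_plus B \<beta> \<delta> \<iota> \<alpha> C CD < 0) \<and>
      (\<forall>C CD. C \<ge> 0 \<and> CD > 0 \<and>
         C / CD > (1 - B / (1 + \<beta> + \<delta>)) / (B / (1 + \<beta>) - 1) \<longrightarrow> eps_plus B \<beta> \<delta> \<iota> \<alpha> C CD > 0) \<and>
      (\<forall>C > 0. eps_plus B \<beta> \<delta> \<iota> \<alpha> C 0 > 0)"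
  proof (intro impI conjI allI)
    assume hB2: "1 + \<beta> < B \<and> B < 1 + \<beta> + \<delta>"
    have g1: "e > 1" using hB2 e1_iff by simp
    have g2: "e / k < 1" using hB2 ek1_iff by simp
    have rr: "(1 - B / (1 + \<beta> + \<delta>)) / (B / (1 + \<beta>) - 1) = (1 - e / k) / (e - 1)"
      unfolding ek by (simp only: e_def')
    fix CD :: real
    show "CD > 0 \<Longrightarrow> lam_plus B \<beta> \<delta> \<iota> \<alpha> CD < 0"
      unfolding lam_eps using g2 by (intro QN) (auto simp: mult_pos_neg)
    fix C :: real
    show "C \<ge> 0 \<and> CD > 0 \<and> C / CD < (1 - B / (1 + \<beta> + \<delta>)) / (B / (1 + \<beta>) - 1) \<Longrightarrow> eps_plus B \<beta> \<delta> \<iota> \<alpha> C CD < 0"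
    proof -
      assume a: "C \<ge> 0 \<and> CD > 0 \<and> C / CD < (1 - B / (1 + \<beta> + \<delta>)) / (B / (1 + \<beta>) - 1)"
      then have "C * (e - 1) < (1 - e / k) * CD" using frac(1)[where C=C and CD=CD and r="1 - e / k" and s="e - 1"] g1 rr by simp
      then show ?thesis using a by (intro QN) (auto simp: algebra_simps)
    qed
    show "C \<ge> 0 \<and> CD > 0 \<and> C / CD > (1 - B / (1 + \<beta> + \<delta>)) / (B / (1 + \<beta>) - 1) \<Longrightarrow> eps_plus B \<beta> \<delta> \<iota> \<alpha> C CD > 0"
    proof -
      assume a: "C \<ge> 0 \<and> CD > 0 \<and> C / CD > (1 - B / (1 + \<beta> + \<delta>)) / (B / (1 + \<beta>) - 1)"
      then have "C * (e - 1) > (1 - e / k) * CD" using frac(2)[where C=C and CD=CD and r="1 - e / k" and s="e - 1"] g1 rr by simp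
      then show ?thesis using a by (intro QP) (auto simp: algebra_simps)
    qed
  next
    fix C :: real
    assume hB2: "1 + \<beta> < B \<and> B < 1 + \<beta> + \<delta>" and "C > 0"
    have g1: "e > 1" using hB2 e1_iff by simp
    then show "eps_plus B \<beta> \<delta> \<iota> \<alpha> C 0 > 0" using \<open>C > 0\<close> by (intro QP) auto
  qed
  have P3: "B < 1 + \<beta> \<longrightarrow>
      (\<forall>CD > 0. lam_plus B \<beta> \<delta> \<iota> \<alpha> CD < 0) \<and>
      (\<forall>C CD. C \<ge> 0 \<and> CD \<ge> 0 \<and> (C, CD) \<noteq> (0, 0) \<longrightarrow> eps_plus B \<beta> \<delta> \<iota> \<alpha> C CD < 0)"
  proof (intro impI conjI allI)
    assume hB3: "B < 1 + \<beta>"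
    have g1: "e < 1" using hB3 e1_iff by simp
    have g2: "e / k < 1" using hB3 h\<delta> ek1_iff by simp
    have epsN: "eps_plus B \<beta> \<delta> \<iota> \<alpha> C CD < 0" if "C \<ge> 0" "CD \<ge> 0" "(C, CD) \<noteq> (0, 0)" for C CD
    proof (rule QN[OF that(1,2)])
      show "C * (e - 1) + CD * (e / k - 1) < 0"
      proof (cases "C = 0")
        case True
        then have "CD > 0" using that by auto
        then show ?thesis using True g2 by (simp add: mult_pos_neg)
      next
        case False
        then have "C > 0" using that by auto
        then have "C * (e - 1) < 0" using g1 by (simp add: mult_pos_neg)
        moreover have "CD * (e / k - 1) \<le> 0" using g2 that(2) by (simp add: mult_nonneg_nonpos)
        ultimately show ?thesis by simp
      qed
    qed
    fix CD :: real
    show "CD > 0 \<Longrightarrow> lam_plus B \<beta> \<delta> \<iota> \<alpha> CD < 0" unfolding lam_eps using epsN[of 0 CD] by simp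
    fix C
    show "C \<ge> 0 \<and> CD \<ge> 0 \<and> (C, CD) \<noteq> (0, 0) \<Longrightarrow> eps_plus B \<beta> \<delta> \<iota> \<alpha> C CD < 0" using epsN by blast
  qed
  have P4: "\<forall>V D z. V \<ge> 0 \<and> D \<ge> 0 \<and> (V, D) \<noteq> (0, 0) \<and>
       is_eigenvalue (jacobian B \<beta> \<delta> \<iota> \<alpha> (st 0 0 0 0 V D)) z \<longrightarrow>
       Im z = 0 \<and> Re z \<le> 0"
    using last_part[OF h\<iota> h\<alpha>] by blast
  show ?thesis using P1 P2 P3 P4 by blast
qed

end
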